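(* Let $n$ be a positive integer with $n\notin\{4,8,12\}$. Then there does not exist any product design $PD\big(n;\ 1_{(3)};\ 1_{(3)};\ n-3\big)$, i.e. there is no product design $(M_1;M_2;N)$ of order $n$ in which $M_1$ and $M_2$ are each orthogonal designs of type $(1,1,1)$ and $N$ is an orthogonal design of type $(n-3)$.
   Context: An orthogonal design $OD(n;\ c_1,\ldots,c_k)$ is a square matrix $C$ of order $n$ with entries from $\{0,\pm x_1,\ldots,\pm x_k\}$, where $x_1,\ldots,x_k$ are commuting indeterminates, such that $CC^{\rm T}=\big(\sum_{j=1}^k c_jx_j^2\big)I_n$; $(c_1,\ldots,c_k)$ is its type. The notation $u_{(k)}$ in a type means that $u$ is repeated $k$ times. For matrices $A=[a_{ij}]$, $B=[b_{ij}]$ of the same size, the Hadamard product is $A*B=[a_{ij}b_{ij}]$, and $\mathbf 0$ is the zero matrix. A product design $PD\big(n;\ a_1,\ldots,a_r;\ b_1,\ldots,b_s;\ u_1,\ldots,u_t\big)$ is a triple $(M_1;M_2;N)$ where $M_1$, $M_2$, $N$ are orthogonal designs of order $n$ and types $(a_1,\ldots,a_r)$, $(b_1,\ldots,b_s)$, $(u_1,\ldots,u_t)$ respectively, such that (i) $M_1*N=M_2*N=\mathbf 0$; (ii) $M_1+N$ and $M_2+N$ are orthogonal designs; (iii) $M_1M_2^{\rm T}=M_2M_1^{\rm T}$. *)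

theory Defs
  imports Complex_Main
begin

text \<open>
  A matrix of order n over the signed indeterminates is encoded as
  C :: nat \<Rightarrow> nat \<Rightarrow> int (only indices < n matter): code 0 means the entry 0,
  code e \<noteq> 0 means the entry sgn(e) * x_{|e|}, where the indeterminates are
  x_1, ..., x_k (code j refers to the j-th entry of the type list, 1-based).
  Polynomial identities in the commuting indeterminates are expressed as
  identities holding for all real values of the indeterminates
  (equivalent, as the real field is infinite).
\<close>

definition od_val :: "int \<Rightarrow> (nat \<Rightarrow> real) \<Rightarrow> real" where
  "od_val e x = (if e = 0 then 0 else of_int (sgn e) * x (nat \<bar>e\<bar>))"

definition is_OD :: "nat \<Rightarrow> int list \<Rightarrow> (nat \<Rightarrow> nat \<Rightarrow> int) \<Rightarrow> bool" where
  "is_OD n cs C \<longleftrightarrow>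
     (\<forall>i<n. \<forall>j<n. \<bar>C i j\<bar> \<le> int (length cs)) \<and>
     (\<forall>x :: nat \<Rightarrow> real. \<forall>i<n. \<forall>l<n.
        (\<Sum>m<n. od_val (C i m) x * od_val (C l m) x) =
        (if i = l then (\<Sum>j\<in>{1..length cs}. of_int (cs ! (j - 1)) * (x j)^2) else 0))"

text \<open>Shift the variables of a design by s (to give it fresh indeterminates).\<close>
definition od_shift :: "nat \<Rightarrow> int \<Rightarrow> int" where
  "od_shift s e = (if e = 0 then 0 else e + sgn e * int s)"

text \<open>Product design PD(n; a; b; u) = (M1; M2; N); the three designs have
  pairwise distinct sets of indeterminates.\<close>
definition is_PD :: "nat \<Rightarrow> int list \<Rightarrow> int list \<Rightarrow> int list \<Rightarrow>
    (nat \<Rightarrow> nat \<Rightarrow> int) \<Rightarrow> (nat \<Rightarrow> nat \<Rightarrow> int) \<Rightarrow> (nat \<Rightarrow> nat \<Rightarrow> int) \<Rightarrow> bool" where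
  "is_PD n a b u M1 M2 N \<longleftrightarrow>
     is_OD n a M1 \<and> is_OD n b M2 \<and> is_OD n u N \<and>
     \<comment> \<open>(i) Hadamard products vanish\<close>
     (\<forall>x y :: nat \<Rightarrow> real. \<forall>i<n. \<forall>j<n. od_val (M1 i j) x * od_val (N i j) y = 0) \<and>
     (\<forall>x y :: nat \<Rightarrow> real. \<forall>i<n. \<forall>j<n. od_val (M2 i j) x * od_val (N i j) y = 0) \<and>
     \<comment> \<open>(ii) M1 + N and M2 + N are orthogonal designs\<close>
     is_OD n (a @ u) (\<lambda>i j. M1 i j + od_shift (length a) (N i j)) \<and>
     is_OD n (b @ u) (\<lambda>i j. M2 i j + od_shift (length b) (N i j)) \<and>
     \<comment> \<open>(iii) M1 M2^T = M2 M1^T\<close>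
     (\<forall>x y :: nat \<Rightarrow> real. \<forall>i<n. \<forall>l<n.
        (\<Sum>m<n. od_val (M1 i m) x * od_val (M2 l m) y) =
        (\<Sum>m<n. od_val (M2 i m) y * od_val (M1 l m) x))"

end

theory Submission
  imports Defs
begin


definition ind :: "nat \<Rightarrow> nat \<Rightarrow> real" where
  "ind k = (\<lambda>t. if t = k then 1 else 0)"

lemma od_val_add: "od_val e (\<lambda>t. x t + y t) = od_val e x + od_val e y"
  by (simp add: od_val_def algebra_simps)

lemma od_val_ind: "k > 0 \<Longrightarrow> od_val e (ind k) = (if \<bar>e\<bar> = int k then of_int (sgn e) else 0)"
  by (auto simp: od_val_def ind_def)

lemma od_val_one: "od_val e (\<lambda>_. 1) = of_int (sgn e)"
  by (simp add: od_val_def)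

lemma sum_ind_prod:
  fixes u v :: real and n p q :: nat
  shows "(\<Sum>m<n. (if m = p then u else 0) * (if m = q then v else 0)) = (if p = q \<and> p < n then u * v else 0)"
proof -
  have "(\<Sum>m<n. (if m = p then u else 0) * (if m = q then v else 0)) = (\<Sum>m<n. if m = p then (if p = q then u*v else 0) else 0)"
    by (rule sum.cong) auto
  also have "\<dots> = (if p = q \<and> p < n then u * v else 0)"
    by (simp add: sum.delta)
  finally show ?thesis .
qed

lemma sum_count: "(\<Sum>m<(n::nat). if P m then 1 else (0::real)) = real (card {m \<in> {..<n}. P m})"
proof -
  have "(\<Sum>m<n. if P m then 1 else (0::real)) = (\<Sum>m\<in>{m \<in> {..<n}. P m}. 1)"
    by (rule sum.inter_filter[symmetric]) simp
  also have "\<dots> = real (card {m \<in> {..<n}. P m})" by simp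
  finally show ?thesis .
qed

locale od3 =
  fixes n :: nat and M :: "nat \<Rightarrow> nat \<Rightarrow> int"
  assumes od: "is_OD n [1,1,1] M"
begin

lemma bound: "i < n \<Longrightarrow> j < n \<Longrightarrow> \<bar>M i j\<bar> \<le> 3"
  using od unfolding is_OD_def by auto

lemma orth: assumes "i < n" "l < n"
  shows "(\<Sum>m<n. od_val (M i m) x * od_val (M l m) x) = (if i = l then x 1 ^ 2 + x 2 ^ 2 + x 3 ^ 2 else 0)"
proof -
  have e: "(\<Sum>m<n. od_val (M i m) x * od_val (M l m) x) = (if i = l then (\<Sum>j\<in>{1..length [1::int,1,1]}. of_int ([1::int,1,1]!(j-1)) * x j^2) else 0)"
    using od assms unfolding is_OD_def by blast
  have s: "{1..length [1::int,1,1]} = {1,2,3}" by auto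
  have "(\<Sum>j\<in>{1..length [1::int,1,1]}. of_int ([1::int,1,1]!(j-1)) * x j^2) = (\<Sum>j\<in>{1,2,3::nat}. x j^2)"
    unfolding s by (rule sum.cong) auto
  also have "\<dots> = x 1 ^ 2 + x 2 ^ 2 + x 3 ^ 2" by simp
  finally show ?thesis using e by simp
qed

lemma row_count:
  assumes r: "r < n" and k: "k \<in> {1,2,3}"
  shows "card {m \<in> {..<n}. \<bar>M r m\<bar> = int k} = 1"
proof -
  have kp: "k > 0" using k by auto
  have "(\<Sum>m<n. od_val (M r m) (ind k) * od_val (M r m) (ind k)) = 1"
    using orth[OF r r, of "ind k"] k by (auto simp: ind_def)
  moreover have "(\<Sum>m<n. od_val (M r m) (ind k) * od_val (M r m) (ind k)) = (\<Sum>m<n. if \<bar>M r m\<bar> = int k then 1 else 0)"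
    apply (rule sum.cong, simp)
    using kp by (auto simp: od_val_ind sgn_if)
  ultimately show ?thesis by (simp add: sum_count)
qed

definition c :: "nat \<Rightarrow> nat \<Rightarrow> nat" where
  "c k r = (THE m. m < n \<and> \<bar>M r m\<bar> = int k)"

definition a :: "nat \<Rightarrow> nat \<Rightarrow> int" where
  "a k r = sgn (M r (c k r))"

lemma c_ex1:
  assumes "r < n" "k \<in> {1,2,3}"
  shows "\<exists>!m. m < n \<and> \<bar>M r m\<bar> = int k"
proof -
  obtain m0 where m0: "{m \<in> {..<n}. \<bar>M r m\<bar> = int k} = {m0}"
    using row_count[OF assms] card_1_singletonE by blast
  have "m0 \<in> {m \<in> {..<n}. \<bar>M r m\<bar> = int k}" using m0 by simp
  moreover have "\<And>m. m < n \<Longrightarrow> \<bar>M r m\<bar> = int k \<Longrightarrow> m = m0"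
  proof -
    fix m assume "m < n" "\<bar>M r m\<bar> = int k"
    then have "m \<in> {m \<in> {..<n}. \<bar>M r m\<bar> = int k}" by simp
    then show "m = m0" using m0 by (metis singletonD)
  qed
  ultimately show ?thesis by (intro ex1I[of _ m0]) auto
qed

lemma c_lt: "r < n \<Longrightarrow> k \<in> {1,2,3} \<Longrightarrow> c k r < n"
  using theI'[OF c_ex1] unfolding c_def by blast

lemma c_abs: "r < n \<Longrightarrow> k \<in> {1,2,3} \<Longrightarrow> \<bar>M r (c k r)\<bar> = int k"
  using theI'[OF c_ex1] unfolding c_def by blast

lemma c_uniq: "r < n \<Longrightarrow> k \<in> {1,2,3} \<Longrightarrow> m < n \<Longrightarrow> \<bar>M r m\<bar> = int k \<Longrightarrow> m = c k r"
proof -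
  assume h: "r < n" "k \<in> {1,2,3}" "m < n" "\<bar>M r m\<bar> = int k"
  from c_ex1[OF h(1,2)] obtain m0 where "\<And>y. y < n \<and> \<bar>M r y\<bar> = int k \<Longrightarrow> y = m0"
    by (elim ex1E) blast
  then show ?thesis using h c_lt[OF h(1,2)] c_abs[OF h(1,2)] by metis
qed

lemma a_sq: "r < n \<Longrightarrow> k \<in> {1,2,3} \<Longrightarrow> a k r = 1 \<or> a k r = -1"
  using c_abs[of r k] unfolding a_def by (auto simp: sgn_if)

lemma supp: "r < n \<Longrightarrow> m < n \<Longrightarrow> M r m \<noteq> 0 \<longleftrightarrow> (\<exists>k\<in>{1,2,3}. m = c k r)"
proof
  assume rm: "r < n" "m < n" and nz: "M r m \<noteq> 0"
  have "\<bar>M r m\<bar> \<le> 3" using bound rm by auto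
  then have "\<bar>M r m\<bar> = 1 \<or> \<bar>M r m\<bar> = 2 \<or> \<bar>M r m\<bar> = 3" using nz by auto
  then show "\<exists>k\<in>{1,2,3}. m = c k r"
  proof (elim disjE)
    assume "\<bar>M r m\<bar> = 1" then have "m = c 1 r" using c_uniq[OF rm(1) _ rm(2), of 1] by simp
    then show ?thesis by blast
  next
    assume "\<bar>M r m\<bar> = 2" then have "m = c 2 r" using c_uniq[OF rm(1) _ rm(2), of 2] by simp
    then show ?thesis by blast
  next
    assume "\<bar>M r m\<bar> = 3" then have "m = c 3 r" using c_uniq[OF rm(1) _ rm(2), of 3] by simp
    then show ?thesis by blast
  qed
next
  assume rm: "r < n" "m < n" and "\<exists>k\<in>{1,2,3}. m = c k r"
  then obtain k where "k \<in> {1,2,3}" "m = c k r" by blast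
  then show "M r m \<noteq> 0" using c_abs[OF rm(1)] by fastforce
qed

lemma od_ind_M: "r < n \<Longrightarrow> m < n \<Longrightarrow> k \<in> {1,2,3} \<Longrightarrow>
   od_val (M r m) (ind k) = (if m = c k r then of_int (a k r) else 0)"
proof -
  assume h: "r < n" "m < n" "k \<in> {1,2,3}"
  have kp: "k > 0" using h(3) by auto
  show ?thesis
  proof (cases "m = c k r")
    case True
    then show ?thesis using c_abs[OF h(1,3)] kp by (simp add: od_val_ind a_def)
  next
    case False
    then have "\<bar>M r m\<bar> \<noteq> int k" using c_uniq[OF h(1,3,2)] by blast
    then show ?thesis using False kp by (simp add: od_val_ind)
  qed
qed

lemma c_idx: "r < n \<Longrightarrow> k \<in> {1,2,3} \<Longrightarrow> i \<in> {1,2,3} \<Longrightarrow> c k r = c i r \<Longrightarrow> k = i"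
proof -
  assume h: "r < n" "k \<in> {1,2,3}" "i \<in> {1,2,3}" "c k r = c i r"
  have "int k = int i" using c_abs[OF h(1,2)] c_abs[OF h(1,3)] h(4) by metis
  then show ?thesis by simp
qed

lemma sum_ind_M: "r < n \<Longrightarrow> l < n \<Longrightarrow> k \<in> {1,2,3} \<Longrightarrow> i \<in> {1,2,3} \<Longrightarrow>
  (\<Sum>m<n. od_val (M r m) (ind k) * od_val (M l m) (ind i)) = (if c k r = c i l then of_int (a k r * a i l) else 0)"
proof -
  assume h: "r < n" "l < n" "k \<in> {1,2,3}" "i \<in> {1,2,3}"
  have "(\<Sum>m<n. od_val (M r m) (ind k) * od_val (M l m) (ind i)) =
     (\<Sum>m<n. (if m = c k r then of_int (a k r) else 0) * (if m = c i l then of_int (a i l) else 0))"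
    apply (rule sum.cong[OF refl])
    subgoal for m using od_ind_M[OF h(1) _ h(3), of m] od_ind_M[OF h(2) _ h(4), of m] by simp
    done
  also have "\<dots> = (if c k r = c i l then of_int (a k r * a i l) else 0)"
    using c_lt[OF h(1,3)] c_lt[OF h(2,4)] by (simp add: sum_ind_prod)
  finally show ?thesis .
qed

lemma c_inj_row: "r < n \<Longrightarrow> l < n \<Longrightarrow> k \<in> {1,2,3} \<Longrightarrow> c k r = c k l \<Longrightarrow> r = l"
proof (rule ccontr)
  assume h: "r < n" "l < n" "k \<in> {1,2,3}" "c k r = c k l" "r \<noteq> l"
  have "(\<Sum>m<n. od_val (M r m) (ind k) * od_val (M l m) (ind k)) = 0"
    using orth[OF h(1,2), of "ind k"] h(5) by simp
  then have "a k r * a k l = 0" using sum_ind_M[OF h(1,2,3,3)] h(4) by simp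
  then show False using a_sq[OF h(1,3)] a_sq[OF h(2,3)] by auto
qed


lemma swap:
  assumes h: "r < n" "l < n" "r \<noteq> l" "k \<in> {1,2,3}" "i \<in> {1,2,3}" "c k r = c i l"
  shows "k \<noteq> i \<and> c i r = c k l \<and> a k r * a i l = - (a i r * a k l)"
proof -
  have ki: "k \<noteq> i" using c_inj_row[OF h(1,2,4)] h by blast
  define x where "x = (\<lambda>t. ind k t + ind i t)"
  have "(\<Sum>m<n. od_val (M r m) x * od_val (M l m) x) = 0"
    using orth[OF h(1,2), of x] h(3) by simp
  moreover have "(\<Sum>m<n. od_val (M r m) x * od_val (M l m) x) =
     (\<Sum>m<n. od_val (M r m) (ind k) * od_val (M l m) (ind k)) +
     (\<Sum>m<n. od_val (M r m) (ind k) * od_val (M l m) (ind i)) +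
     (\<Sum>m<n. od_val (M r m) (ind i) * od_val (M l m) (ind k)) +
     (\<Sum>m<n. od_val (M r m) (ind i) * od_val (M l m) (ind i))"
    unfolding x_def od_val_add by (simp add: algebra_simps sum.distrib)
  moreover have "c k r \<noteq> c k l" using c_inj_row[OF h(1,2,4)] h(3) by blast
  moreover have "c i r \<noteq> c i l" using c_inj_row[OF h(1,2,5)] h(3) by blast
  ultimately have e: "of_int (a k r * a i l) + (if c i r = c k l then of_int (a i r * a k l) else 0) = (0::real)"
    using sum_ind_M[OF h(1,2,4,4)] sum_ind_M[OF h(1,2,4,5)] sum_ind_M[OF h(1,2,5,4)] sum_ind_M[OF h(1,2,5,5)] h(6)
    by simp
  have "a k r * a i l \<noteq> 0" using a_sq[OF h(1,4)] a_sq[OF h(2,5)] by auto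
  then have "c i r = c k l" using e by (auto split: if_splits)
  moreover then have "of_int (a k r * a i l + a i r * a k l) = (0::real)" using e by simp
  then have "a k r * a i l + a i r * a k l = 0" by (simp only: of_int_eq_0_iff)
  then have "a k r * a i l = - (a i r * a k l)" by simp
  ultimately show ?thesis using ki by blast
qed

lemma surj: assumes "i \<in> {1,2,3}" "m < n" shows "\<exists>l<n. c i l = m"
proof -
  have "inj_on (\<lambda>l. c i l) {..<n}" using c_inj_row[OF _ _ assms(1)] by (auto simp: inj_on_def)
  moreover have "(\<lambda>l. c i l) ` {..<n} \<subseteq> {..<n}" using c_lt[OF _ assms(1)] by auto
  ultimately have "(\<lambda>l. c i l) ` {..<n} = {..<n}" by (simp add: endo_inj_surj)
  then show ?thesis using assms(2) by (metis imageE lessThan_iff)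
qed

lemma third:
  assumes h: "r < n" "l < n" "r \<noteq> l" "k \<in> {1,2,3}" "i \<in> {1,2,3}" "c k r = c i l"
    and t: "t \<in> {1,2,3}" "t \<noteq> k" "t \<noteq> i" and u: "u \<in> {1,2,3}"
  shows "c t r \<noteq> c u l"
proof
  assume tu: "c t r = c u l"
  have s1: "k \<noteq> i" "c i r = c k l" using swap[OF h] by auto
  have s2: "t \<noteq> u" "c u r = c t l" using swap[OF h(1-3) t(1) u tu] by auto
  show False
  proof (cases "u = k")
    case True
    then have "c t r = c i r" using tu s1 by simp
    then show False using c_idx[OF h(1) t(1) h(5)] t by blast
  next
    case F1: False
    show False
    proof (cases "u = i")
      case True
      then have "c t r = c k r" using tu h(6) by simp
      then show False using c_idx[OF h(1) t(1) h(4)] t by blast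
    next
      case False
      then show False using F1 s1 s2 t u h(4,5) by auto
    qed
  qed
qed

definition near :: "nat \<Rightarrow> nat \<Rightarrow> bool" where
  "near r l \<longleftrightarrow> (\<exists>k\<in>{1,2,3}. \<exists>i\<in>{1,2,3}. c k r = c i l)"

lemma near_sym: assumes "near r l" shows "near l r"
proof -
  obtain k i where "k \<in> {1,2,3}" "i \<in> {1,2,3}" "c k r = c i l" using assms near_def by blast
  then show ?thesis unfolding near_def by (intro bexI[of _ i] bexI[of _ k]) auto
qed

lemma near_refl: "near r r"
  unfolding near_def by blast

lemma near_trans:
  assumes h: "r < n" "r' < n" "l < n" "near r r'" "near r' l"
  shows "near r l"
proof (cases "r = r' \<or> r' = l \<or> r = l")
  case True
  then show ?thesis using h near_refl by auto
next
  case False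
  then have d: "r \<noteq> r'" "r' \<noteq> l" by auto
  obtain k i where ki: "k \<in> {1,2,3}" "i \<in> {1,2,3}" "c k r = c i r'" using h(4) near_def by blast
  obtain p q where pq: "p \<in> {1,2,3}" "q \<in> {1,2,3}" "c p r' = c q l" using h(5) near_def by blast
  have s1: "k \<noteq> i" "c i r = c k r'" using swap[OF h(1,2) d(1) ki] by auto
  have s2: "p \<noteq> q" "c q r' = c p l" using swap[OF h(2,3) d(2) pq] by auto
  have "p = i \<or> p = k \<or> q = i \<or> q = k" using ki(1,2) pq(1,2) s1(1) s2(1) by auto
  then show ?thesis
  proof (elim disjE)
    assume "p = i" then have "c k r = c q l" using ki(3) pq(3) by simp
    then show ?thesis unfolding near_def using ki(1) pq(2) by blast
  next
    assume "p = k" then have "c i r = c q l" using s1(2) pq(3) by simp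
    then show ?thesis unfolding near_def using ki(2) pq(2) by blast
  next
    assume "q = i" then have "c k r = c p l" using ki(3) s2(2) by simp
    then show ?thesis unfolding near_def using ki(1) pq(1) by blast
  next
    assume "q = k" then have "c i r = c p l" using s1(2) s2(2) by simp
    then show ?thesis unfolding near_def using ki(2) pq(1) by blast
  qed
qed

lemma near_card:
  assumes r: "r < n"
  shows "card {l \<in> {..<n}. near r l} \<le> 4"
proof -
  define L where "L = (\<lambda>k i. {l \<in> {..<n}. c i l = c k r})"
  have cL: "card (L k i) \<le> 1" if "i \<in> {1,2,3}" for k i
  proof -
    have "\<forall>x\<in>L k i. \<forall>y\<in>L k i. x = y"
      unfolding L_def using c_inj_row[OF _ _ that] by auto
    then show ?thesis using card_le_Suc0_iff_eq[of "L k i"] unfolding L_def by auto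
  qed
  have sub: "{l \<in> {..<n}. near r l} \<subseteq> {r} \<union> L 1 2 \<union> L 1 3 \<union> L 2 3"
  proof
    fix l assume "l \<in> {l \<in> {..<n}. near r l}"
    then have l: "l < n" "near r l" by auto
    show "l \<in> {r} \<union> L 1 2 \<union> L 1 3 \<union> L 2 3"
    proof (cases "l = r")
      case True then show ?thesis by simp
    next
      case False
      obtain k i where ki: "k \<in> {1,2,3}" "i \<in> {1,2,3}" "c k r = c i l" using l(2) near_def by blast
      have s: "k \<noteq> i" "c i r = c k l" using swap[OF r l(1) _ ki] False by auto
      have "(k = 1 \<and> i = 2) \<or> (k = 2 \<and> i = 1) \<or> (k = 1 \<and> i = 3) \<or> (k = 3 \<and> i = 1) \<or> (k = 2 \<and> i = 3) \<or> (k = 3 \<and> i = 2)"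
        using ki(1,2) s(1) by auto
      then have "c 2 l = c 1 r \<or> c 3 l = c 1 r \<or> c 3 l = c 2 r" using ki(3) s(2) by auto
      then show ?thesis unfolding L_def using l(1) by blast
    qed
  qed
  have "card {l \<in> {..<n}. near r l} \<le> card ({r} \<union> L 1 2 \<union> L 1 3 \<union> L 2 3)"
    by (rule card_mono[OF _ sub]) (auto simp: L_def)
  also have "\<dots> \<le> card {r} + card (L 1 2) + card (L 1 3) + card (L 2 3)"
    by (smt (verit) add_le_mono card_Un_le dual_order.trans le_refl)
  also have "\<dots> \<le> 4" using cL[of 2 1] cL[of 3 1] cL[of 3 2] by simp
  finally show ?thesis .
qed

end

lemma sum_ind_single:
  fixes u :: real and n p :: nat
  shows "(\<Sum>m<n. (if m = p then u else 0) * f m) = (if p < n then u * f p else 0)"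
    and "(\<Sum>m<n. f m * (if m = p then u else 0)) = (if p < n then f p * u else 0)"
proof -
  have "(\<Sum>m<n. (if m = p then u else 0) * f m) = (\<Sum>m<n. if m = p then u * f p else 0)"
    by (rule sum.cong) auto
  then show "(\<Sum>m<n. (if m = p then u else 0) * f m) = (if p < n then u * f p else 0)" by simp
  have "(\<Sum>m<n. f m * (if m = p then u else 0)) = (\<Sum>m<n. if m = p then f p * u else 0)"
    by (rule sum.cong) auto
  then show "(\<Sum>m<n. f m * (if m = p then u else 0)) = (if p < n then f p * u else 0)" by simp
qed

locale odn = od3 +
  fixes N :: "nat \<Rightarrow> nat \<Rightarrow> int"
  assumes odN: "is_OD n [int n - 3] N"
    and hadM: "\<forall>x y :: nat \<Rightarrow> real. \<forall>i<n. \<forall>j<n. od_val (M i j) x * od_val (N i j) y = 0"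
    and odF: "is_OD n ([1,1,1] @ [int n - 3]) (\<lambda>i j. M i j + od_shift 3 (N i j))"
begin

lemma N_bound: "r < n \<Longrightarrow> m < n \<Longrightarrow> \<bar>N r m\<bar> \<le> 1"
  using odN unfolding is_OD_def by auto

lemma N_pm: "r < n \<Longrightarrow> m < n \<Longrightarrow> N r m \<noteq> 0 \<Longrightarrow> N r m = 1 \<or> N r m = -1"
  using N_bound[of r m] by auto

lemma N_zero: assumes "r < n" "m < n" "M r m \<noteq> 0" shows "N r m = 0"
proof -
  have "od_val (M r m) (\<lambda>_. 1) * od_val (N r m) (\<lambda>_. 1) = 0" using hadM assms(1,2) by blast
  then have "of_int (sgn (M r m) * sgn (N r m)) = (0::real)" by (simp add: od_val_one)
  then have "sgn (M r m) * sgn (N r m) = 0" by (simp only: of_int_eq_0_iff)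
  then show ?thesis using assms(3) by (simp add: sgn_0_0)
qed

lemma N_count: assumes r: "r < n" shows "int (card {m \<in> {..<n}. N r m \<noteq> 0}) = int n - 3"
proof -
  have e: "(\<Sum>m<n. od_val (N r m) (\<lambda>_. 1) * od_val (N r m) (\<lambda>_. 1)) =
     (\<Sum>j\<in>{1..length [int n - 3]}. of_int ([int n - 3]!(j-1)) * ((\<lambda>_. 1::real) j)^2)"
    using odN r unfolding is_OD_def by auto
  have "(\<Sum>j\<in>{1..length [int n - 3]}. of_int ([int n - 3]!(j-1)) * ((\<lambda>_. 1::real) j)^2) = of_int (int n - 3)"
    by simp
  moreover have "(\<Sum>m<n. od_val (N r m) (\<lambda>_. 1) * od_val (N r m) (\<lambda>_. 1)) = (\<Sum>m<n. if N r m \<noteq> 0 then 1 else (0::real))"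
    by (rule sum.cong) (auto simp: od_val_one sgn_if)
  ultimately have "real (card {m \<in> {..<n}. N r m \<noteq> 0}) = of_int (int n - 3)"
    using e sum_count by simp
  then show ?thesis by linarith
qed

lemma N_nonzero: assumes h: "r < n" "m0 < n" "M r m0 = 0" shows "N r m0 \<noteq> 0"
proof
  assume N0: "N r m0 = 0"
  define S where "S = {c 1 r, c 2 r, c 3 r, m0}"
  have d: "c 1 r \<noteq> c 2 r" "c 1 r \<noteq> c 3 r" "c 2 r \<noteq> c 3 r"
    using c_idx[OF h(1), of 1 2] c_idx[OF h(1), of 1 3] c_idx[OF h(1), of 2 3] by auto
  have "M r (c k r) \<noteq> 0" if "k \<in> {1,2,3}" for k using supp[OF h(1) c_lt[OF h(1) that]] that by blast
  then have d2: "m0 \<noteq> c 1 r" "m0 \<noteq> c 2 r" "m0 \<noteq> c 3 r" using h(3) by auto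
  have cS: "card S = 4" unfolding S_def using d d2 by auto
  have Ssub: "S \<subseteq> {..<n}" unfolding S_def using c_lt[OF h(1)] h(2) by auto
  have "{m \<in> {..<n}. N r m \<noteq> 0} \<subseteq> {..<n} - S"
  proof
    fix m assume m: "m \<in> {m \<in> {..<n}. N r m \<noteq> 0}"
    then have "M r m = 0" using N_zero[OF h(1)] by auto
    then have "m \<notin> {c 1 r, c 2 r, c 3 r}" using supp[OF h(1)] m by auto
    then show "m \<in> {..<n} - S" using m N0 unfolding S_def by auto
  qed
  then have "card {m \<in> {..<n}. N r m \<noteq> 0} \<le> card ({..<n} - S)" by (intro card_mono) auto
  also have "\<dots> = n - 4" using card_Diff_subset[OF _ Ssub] cS by (simp add: S_def)
  finally have "card {m \<in> {..<n}. N r m \<noteq> 0} \<le> n - 4" .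
  moreover have "4 \<le> n" using card_mono[OF _ Ssub] cS by simp
  ultimately show False using N_count[OF h(1)] by linarith
qed

lemma full_val: assumes "r < n" "m < n"
  shows "od_val (M r m + od_shift 3 (N r m)) x = od_val (M r m) x + of_int (N r m) * x 4"
proof (cases "M r m = 0")
  case True
  have "N r m = 0 \<or> N r m = 1 \<or> N r m = -1" using N_bound[OF assms] by auto
  then show ?thesis using True by (auto simp: od_val_def od_shift_def)
next
  case False
  then show ?thesis using N_zero[OF assms False] by (simp add: od_shift_def)
qed

lemma full_orth: assumes "r < n" "l < n" "r \<noteq> l"
  shows "(\<Sum>m<n. (od_val (M r m) x + of_int (N r m) * x 4) * (od_val (M l m) x + of_int (N l m) * x 4)) = 0"
proof -
  have "(\<Sum>m<n. od_val (M r m + od_shift 3 (N r m)) x * od_val (M l m + od_shift 3 (N l m)) x) = 0"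
    using odF assms unfolding is_OD_def by auto
  moreover have "(\<Sum>m<n. od_val (M r m + od_shift 3 (N r m)) x * od_val (M l m + od_shift 3 (N l m)) x)
     = (\<Sum>m<n. (od_val (M r m) x + of_int (N r m) * x 4) * (od_val (M l m) x + of_int (N l m) * x 4))"
    by (rule sum.cong) (auto simp: full_val assms)
  ultimately show ?thesis by simp
qed

lemma od_ind4: "r < n \<Longrightarrow> m < n \<Longrightarrow> od_val (M r m) (ind 4) = 0"
  using bound[of r m] by (simp add: od_val_ind)

lemma cross: assumes h: "r < n" "l < n" "r \<noteq> l" "k \<in> {1,2,3}"
  shows "a k r * N l (c k r) + a k l * N r (c k l) = 0"
proof -
  define x where "x = (\<lambda>t. ind k t + ind 4 t)"
  have x4: "x 4 = 1" using h(4) by (auto simp: x_def ind_def)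
  have vx: "od_val (M r' m) x = od_val (M r' m) (ind k)" if "r' < n" "m < n" for r' m
    unfolding x_def od_val_add using od_ind4[OF that] by simp
  have A: "(\<Sum>m<n. (od_val (M r m) (ind k) + of_int (N r m)) * (od_val (M l m) (ind k) + of_int (N l m))) = 0"
    using full_orth[OF h(1-3), of x] x4 vx[OF h(1)] vx[OF h(2)] by simp
  have B: "(\<Sum>m<n. of_int (N r m) * of_int (N l m)) = (0::real)"
    using full_orth[OF h(1-3), of "ind 4"] od_ind4[OF h(1)] od_ind4[OF h(2)] by (simp add: ind_def)
  have C: "(\<Sum>m<n. od_val (M r m) (ind k) * od_val (M l m) (ind k)) = 0"
    using sum_ind_M[OF h(1,2,4,4)] c_inj_row[OF h(1,2,4)] h(3) by auto
  have D1: "(\<Sum>m<n. od_val (M r m) (ind k) * of_int (N l m)) = of_int (a k r * N l (c k r))"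
  proof -
    have "(\<Sum>m<n. od_val (M r m) (ind k) * of_int (N l m)) = (\<Sum>m<n. (if m = c k r then of_int (a k r) else 0) * of_int (N l m))"
      apply (rule sum.cong[OF refl])
      subgoal for m using od_ind_M[OF h(1) _ h(4), of m] by simp
      done
    then show ?thesis using c_lt[OF h(1,4)] by (simp add: sum_ind_single)
  qed
  have D2: "(\<Sum>m<n. of_int (N r m) * od_val (M l m) (ind k)) = of_int (N r (c k l) * a k l)"
  proof -
    have "(\<Sum>m<n. of_int (N r m) * od_val (M l m) (ind k)) = (\<Sum>m<n. of_int (N r m) * (if m = c k l then of_int (a k l) else 0))"
      apply (rule sum.cong[OF refl])
      subgoal for m using od_ind_M[OF h(2) _ h(4), of m] by simp
      done
    then show ?thesis using c_lt[OF h(2,4)] by (simp add: sum_ind_single)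
  qed
  have "(\<Sum>m<n. (od_val (M r m) (ind k) + of_int (N r m)) * (od_val (M l m) (ind k) + of_int (N l m))) =
     (\<Sum>m<n. od_val (M r m) (ind k) * od_val (M l m) (ind k)) + (\<Sum>m<n. od_val (M r m) (ind k) * of_int (N l m))
     + (\<Sum>m<n. of_int (N r m) * od_val (M l m) (ind k)) + (\<Sum>m<n. of_int (N r m) * of_int (N l m))"
    by (simp add: algebra_simps sum.distrib)
  then have "of_int (a k r * N l (c k r)) + of_int (N r (c k l) * a k l) = (0::real)"
    using A B C D1 D2 by simp
  then have "of_int (a k r * N l (c k r) + N r (c k l) * a k l) = (0::real)" by simp
  then have "a k r * N l (c k r) + N r (c k l) * a k l = 0" by (simp only: of_int_eq_0_iff)
  then show ?thesis by (simp add: mult.commute)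
qed

end


lemma sign_lemA:
  fixes a1 a2 b1 b2 X Y :: int
  assumes "a1 = 1 \<or> a1 = -1" "a2 = 1 \<or> a2 = -1" "b1 = 1 \<or> b1 = -1" "b2 = 1 \<or> b2 = -1"
    "X = 1 \<or> X = -1" "Y = 1 \<or> Y = -1"
    "a1 * X + a2 * Y = 0" "b1 * X + b2 * Y = 0"
  shows "a1 * b1 = a2 * b2"
  using assms by (elim disjE) simp_all

lemma sign_lemB:
  fixes akr akl bpr bpl bjr bjl :: int
  assumes "akr = 1 \<or> akr = -1" "akl = 1 \<or> akl = -1" "bpr = 1 \<or> bpr = -1" "bpl = 1 \<or> bpl = -1"
    "bjr = 1 \<or> bjr = -1" "bjl = 1 \<or> bjl = -1"
    "akr * bpl = bpr * akl" "bjr * bpl = - (bpr * bjl)"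
  shows "akl * bjl = - (akr * bjr)"
  using assms by (elim disjE) simp_all

lemma exists_outside:
  assumes "finite F" "card F < n"
  shows "\<exists>x<n. x \<notin> F"
proof (rule ccontr)
  assume "\<not> (\<exists>x<n. x \<notin> F)"
  then have "{..<n} \<subseteq> F" by auto
  then have "card {..<n} \<le> card F" by (rule card_mono[OF assms(1)])
  then show False using assms(2) by simp
qed

lemma main:
  assumes pd: "is_PD n [1,1,1] [1,1,1] [int n - 3] M1 M2 N" and n0: "n > 0"
  shows "4 dvd n \<and> n \<le> 12"
proof -
  have len3: "length [1::int,1,1] = 3" by simp
  note pdu = pd[unfolded is_PD_def len3]
  have h1: "is_OD n [1,1,1] M1" using pdu by (rule conjunct1)
  have h2: "is_OD n [1,1,1] M2" using pdu[THEN conjunct2] by (rule conjunct1)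
  have h3: "is_OD n [int n - 3] N" using pdu[THEN conjunct2, THEN conjunct2] by (rule conjunct1)
  have h4: "\<forall>x y :: nat \<Rightarrow> real. \<forall>i<n. \<forall>j<n. od_val (M1 i j) x * od_val (N i j) y = 0"
    using pdu[THEN conjunct2, THEN conjunct2, THEN conjunct2] by (rule conjunct1)
  have h5: "\<forall>x y :: nat \<Rightarrow> real. \<forall>i<n. \<forall>j<n. od_val (M2 i j) x * od_val (N i j) y = 0"
    using pdu[THEN conjunct2, THEN conjunct2, THEN conjunct2, THEN conjunct2] by (rule conjunct1)
  have h6: "is_OD n ([1,1,1] @ [int n - 3]) (\<lambda>i j. M1 i j + od_shift 3 (N i j))"
    using pdu[THEN conjunct2, THEN conjunct2, THEN conjunct2, THEN conjunct2, THEN conjunct2] by (rule conjunct1)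
  have h7: "is_OD n ([1,1,1] @ [int n - 3]) (\<lambda>i j. M2 i j + od_shift 3 (N i j))"
    using pdu[THEN conjunct2, THEN conjunct2, THEN conjunct2, THEN conjunct2, THEN conjunct2, THEN conjunct2] by (rule conjunct1)
  have comm: "\<forall>x y :: nat \<Rightarrow> real. \<forall>i<n. \<forall>l<n.
        (\<Sum>m<n. od_val (M1 i m) x * od_val (M2 l m) y) =
        (\<Sum>m<n. od_val (M2 i m) y * od_val (M1 l m) x)"
    using pdu[THEN conjunct2, THEN conjunct2, THEN conjunct2, THEN conjunct2, THEN conjunct2, THEN conjunct2] by (rule conjunct2)
  interpret A: odn n M1 N using h1 h3 h4 h6 by (simp add: odn_def od3_def odn_axioms_def)
  interpret B: odn n M2 N using h2 h3 h5 h7 by (simp add: odn_def od3_def odn_axioms_def)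

  have supp_eq: "M2 r m \<noteq> 0 \<longleftrightarrow> M1 r m \<noteq> 0" if "r < n" "m < n" for r m
    using A.N_zero[OF that] A.N_nonzero[OF that] B.N_zero[OF that] B.N_nonzero[OF that] by blast
  have "0 < n" by (rule n0)
  have dd: "A.c 1 0 \<noteq> A.c 2 0" "A.c 1 0 \<noteq> A.c 3 0" "A.c 2 0 \<noteq> A.c 3 0"
    using A.c_idx[OF n0, of 1 2] A.c_idx[OF n0, of 1 3] A.c_idx[OF n0, of 2 3] by auto
  have "card {A.c 1 0, A.c 2 0, A.c 3 0} \<le> card {..<n}"
    by (rule card_mono) (use A.c_lt[OF n0] in auto)
  then have n3: "3 \<le> n" using dd by simp
  \<comment> \<open>Hadamard matrix argument\<close>
  define h where "h = (\<lambda>r m. sgn (M1 r m) + N r m)"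
  have hpm: "h r m = 1 \<or> h r m = -1" if "r < n" "m < n" for r m
  proof (cases "M1 r m = 0")
    case True
    then show ?thesis using A.N_nonzero[OF that True] A.N_pm[OF that] by (auto simp: h_def)
  next
    case False
    then show ?thesis using A.N_zero[OF that False] by (auto simp: h_def sgn_if)
  qed
  have horth: "(\<Sum>m<n. h r m * h l m) = 0" if "r < n" "l < n" "r \<noteq> l" for r l
  proof -
    have "(\<Sum>m<n. (od_val (M1 r m) (\<lambda>_. 1) + of_int (N r m) * 1) * (od_val (M1 l m) (\<lambda>_. 1) + of_int (N l m) * 1)) = (0::real)"
      using A.full_orth[OF that, of "\<lambda>_. 1"] by simp
    then have "of_int (\<Sum>m<n. h r m * h l m) = (0::real)" by (simp add: od_val_one h_def)
    then show ?thesis by (simp only: of_int_eq_0_iff)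
  qed
  have hsq: "(\<Sum>m<n. h 0 m * h 0 m) = int n"
  proof -
    have "(\<Sum>m<n. h 0 m * h 0 m) = (\<Sum>m<n. (1::int))"
      apply (rule sum.cong[OF refl])
      subgoal for m using hpm[OF n0, of m] by auto
      done
    then show ?thesis by simp
  qed
  have "(\<Sum>m<n. (h 0 m + h 1 m) * (h 0 m + h 2 m)) =
     (\<Sum>m<n. h 0 m * h 0 m) + (\<Sum>m<n. h 0 m * h 2 m) + (\<Sum>m<n. h 1 m * h 0 m) + (\<Sum>m<n. h 1 m * h 2 m)"
    by (simp add: algebra_simps sum.distrib)
  also have "\<dots> = int n" using hsq horth[of 0 2] horth[of 1 0] horth[of 1 2] n3 by simp
  finally have hs: "(\<Sum>m<n. (h 0 m + h 1 m) * (h 0 m + h 2 m)) = int n" .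
  have "4 dvd (\<Sum>m<n. (h 0 m + h 1 m) * (h 0 m + h 2 m))"
  proof (rule dvd_sum)
    fix m assume "m \<in> {..<n}"
    then have m: "m < n" by simp
    have "0 < n" "1 < n" "2 < n" using n3 by auto
    then have q: "h 0 m = 1 \<or> h 0 m = - 1" "h 1 m = 1 \<or> h 1 m = - 1" "h 2 m = 1 \<or> h 2 m = - 1"
      using hpm[OF _ m, of 0] hpm[OF _ m, of 1] hpm[OF _ m, of 2] by auto
    then show "4 dvd (h 0 m + h 1 m) * (h 0 m + h 2 m)"
      by (elim disjE) simp_all
  qed
  then have d4: "4 dvd n" using hs by presburger
  have claimA: "A.a k r * B.a j r = A.a k l * B.a j l"
    if h: "r < n" "l < n" "\<not> A.near r l" "k \<in> {1,2,3}" "j \<in> {1,2,3}"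
       "A.c k r = B.c j r" "A.c k l = B.c j l" for r l k j
  proof -
    have rl: "r \<noteq> l" using h(3) A.near_refl by blast
    have cr: "A.c k r < n" "A.c k l < n" using A.c_lt[OF h(1,4)] A.c_lt[OF h(2,4)] by blast+
    have X: "N l (A.c k r) \<noteq> 0"
    proof (rule A.N_nonzero[OF h(2) cr(1)])
      show "M1 l (A.c k r) = 0"
      proof (rule ccontr)
        assume "M1 l (A.c k r) \<noteq> 0"
        then obtain i where "i \<in> {1,2,3}" "A.c k r = A.c i l" using A.supp[OF h(2) cr(1)] by blast
        then show False using h(3,4) unfolding A.near_def by blast
      qed
    qed
    have Y: "N r (A.c k l) \<noteq> 0"
    proof (rule A.N_nonzero[OF h(1) cr(2)])
      show "M1 r (A.c k l) = 0"
      proof (rule ccontr)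
        assume "M1 r (A.c k l) \<noteq> 0"
        then obtain i where "i \<in> {1,2,3}" "A.c k l = A.c i r" using A.supp[OF h(1) cr(2)] by blast
        then have "A.near l r" using h(4) unfolding A.near_def by blast
        then show False using h(3) A.near_sym by blast
      qed
    qed
    have e1: "A.a k r * N l (A.c k r) + A.a k l * N r (A.c k l) = 0" using A.cross[OF h(1,2) rl h(4)] .
    have e2: "B.a j r * N l (A.c k r) + B.a j l * N r (A.c k l) = 0" using B.cross[OF h(1,2) rl h(5)] h(6,7) by simp
    show ?thesis
      by (rule sign_lemA[OF A.a_sq[OF h(1,4)] A.a_sq[OF h(2,4)] B.a_sq[OF h(1,5)] B.a_sq[OF h(2,5)]
            A.N_pm[OF h(2) cr(1) X] A.N_pm[OF h(1) cr(2) Y] e1 e2])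
  qed
  have claimB: "\<exists>l<n. A.near r l \<and> A.c k l = B.c j l \<and> A.a k l * B.a j l = - (A.a k r * B.a j r)"
    if h: "r < n" "k \<in> {1,2,3}" "j \<in> {1,2,3}" "A.c k r = B.c j r" for r k j
  proof -
    obtain i where i: "i \<in> {1,2,3}" "i \<noteq> k" using h(2) by (metis insertCI one_neq_zero numeral_One num.distinct(1) numeral_eq_iff)
    have m: "A.c k r < n" by (rule A.c_lt[OF h(1,2)])
    obtain l where l: "l < n" "A.c i l = A.c k r" using A.surj[OF i(1) m] by blast
    have rl: "r \<noteq> l"
    proof
      assume "r = l" then have "A.c i r = A.c k r" using l by simp
      then show False using A.c_idx[OF h(1) i(1) h(2)] i(2) by blast
    qed
    have sw1: "A.c i r = A.c k l" using A.swap[OF h(1) l(1) rl h(2) i(1) l(2)[symmetric]] by blast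
    have "M1 l (A.c k r) \<noteq> 0" using A.supp[OF l(1) m] l(2) i(1) by metis
    then have "M2 l (A.c k r) \<noteq> 0" using supp_eq[OF l(1) m] by blast
    then obtain p where p: "p \<in> {1,2,3}" "A.c k r = B.c p l" using B.supp[OF l(1) m] by blast
    have sw2: "j \<noteq> p" "B.c p r = B.c j l" "B.a j r * B.a p l = - (B.a p r * B.a j l)"
      using B.swap[OF h(1) l(1) rl h(3) p(1)] h(4) p(2) by auto
    have pr: "B.c p r < n" by (rule B.c_lt[OF h(1) p(1)])
    have "M2 r (B.c p r) \<noteq> 0" using B.supp[OF h(1) pr] p(1) by blast
    then have "M1 r (B.c p r) \<noteq> 0" using supp_eq[OF h(1) pr] by blast
    then obtain t where t: "t \<in> {1,2,3}" "B.c p r = A.c t r" using A.supp[OF h(1) pr] by blast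
    have tk: "t \<noteq> k"
    proof
      assume "t = k" then have "B.c p r = B.c j r" using t(2) h(4) by simp
      then show False using B.c_idx[OF h(1) p(1) h(3)] sw2(1) by simp
    qed
    have ti: "t = i"
    proof (rule ccontr)
      assume tni: "t \<noteq> i"
      have jl: "B.c j l < n" by (rule B.c_lt[OF l(1) h(3)])
      have "M2 l (B.c j l) \<noteq> 0" using B.supp[OF l(1) jl] h(3) by blast
      then have "M1 l (B.c j l) \<noteq> 0" using supp_eq[OF l(1) jl] by blast
      then obtain u where u: "u \<in> {1,2,3}" "B.c j l = A.c u l" using A.supp[OF l(1) jl] by blast
      have "A.c t r \<noteq> A.c u l" using A.third[OF h(1) l(1) rl h(2) i(1) l(2)[symmetric] t(1) tk tni u(1)] .
      then show False using t(2) sw2(2) u(2) by simp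
    qed
    have ckl: "A.c k l = B.c j l" using sw1 sw2(2) t(2) ti by simp
    have E1: "A.a k r * B.a p l = B.a p r * A.a k l"
    proof -
      have c1: "(\<Sum>m<n. od_val (M1 r m) (ind k) * od_val (M2 l m) (ind p)) =
          (\<Sum>m<n. od_val (M2 r m) (ind p) * od_val (M1 l m) (ind k))"
        using comm h(1) l(1) by blast
      have "(\<Sum>m<n. od_val (M1 r m) (ind k) * od_val (M2 l m) (ind p)) =
          (\<Sum>m<n. (if m = A.c k r then of_int (A.a k r) else 0) * (if m = B.c p l then of_int (B.a p l) else 0))"
        apply (rule sum.cong[OF refl])
        subgoal for m using A.od_ind_M[OF h(1) _ h(2), of m] B.od_ind_M[OF l(1) _ p(1), of m] by simp
        done
      also have "\<dots> = of_int (A.a k r * B.a p l)" using p(2) m by (simp add: sum_ind_prod)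
      finally have L: "(\<Sum>m<n. od_val (M1 r m) (ind k) * od_val (M2 l m) (ind p)) = of_int (A.a k r * B.a p l)" .
      have "(\<Sum>m<n. od_val (M2 r m) (ind p) * od_val (M1 l m) (ind k)) =
          (\<Sum>m<n. (if m = B.c p r then of_int (B.a p r) else 0) * (if m = A.c k l then of_int (A.a k l) else 0))"
        apply (rule sum.cong[OF refl])
        subgoal for m using B.od_ind_M[OF h(1) _ p(1), of m] A.od_ind_M[OF l(1) _ h(2), of m] by simp
        done
      also have "\<dots> = of_int (B.a p r * A.a k l)" using sw1 t(2) ti pr by (simp add: sum_ind_prod)
      finally have R: "(\<Sum>m<n. od_val (M2 r m) (ind p) * od_val (M1 l m) (ind k)) = of_int (B.a p r * A.a k l)" .
      have "of_int (A.a k r * B.a p l) = (of_int (B.a p r * A.a k l) :: real)" using c1 L R by simp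
      then show ?thesis by (simp only: of_int_eq_iff)
    qed
    have E3: "A.a k l * B.a j l = - (A.a k r * B.a j r)"
      by (rule sign_lemB[OF A.a_sq[OF h(1,2)] A.a_sq[OF l(1) h(2)] B.a_sq[OF h(1) p(1)] B.a_sq[OF l(1) p(1)]
          B.a_sq[OF h(1,3)] B.a_sq[OF l(1) h(3)] E1 sw2(3)])
    have "A.near r l" unfolding A.near_def using h(2) i(1) l(2) by metis
    then show ?thesis using l(1) ckl E3 by blast
  qed
  have key: False
    if h: "r < n" "l < n" "\<not> A.near r l" "j \<in> {1,2,3}" "A.c 1 r = B.c j r" "A.c 1 l = B.c j l" for r l j
  proof -
    obtain r' where r': "r' < n" "A.near r r'" "A.c 1 r' = B.c j r'" "A.a 1 r' * B.a j r' = - (A.a 1 r * B.a j r)"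
      using claimB[OF h(1) _ h(4) h(5)] by auto
    have fr: "\<not> A.near r' l" using A.near_trans[OF h(1) r'(1) h(2) r'(2)] h(3) by blast
    have e1: "A.a 1 r * B.a j r = A.a 1 l * B.a j l" using claimA[OF h(1,2,3) _ h(4,5,6)] by simp
    have e2: "A.a 1 r' * B.a j r' = A.a 1 l * B.a j l" using claimA[OF r'(1) h(2) fr _ h(4) r'(3) h(6)] by simp
    have "A.a 1 r * B.a j r \<noteq> 0" using A.a_sq[OF h(1), of 1] B.a_sq[OF h(1) h(4)] by auto
    moreover have "A.a 1 r * B.a j r = 0" using e1 e2 r'(4) by linarith
    ultimately show False by blast
  qed
  have jex: "\<exists>j\<in>{1,2,3}. A.c 1 r = B.c j r" if r: "r < n" for r
  proof -
    have m: "A.c 1 r < n" by (rule A.c_lt[OF r]) simp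
    have "M1 r (A.c 1 r) \<noteq> 0" using A.supp[OF r m] by blast
    then have "M2 r (A.c 1 r) \<noteq> 0" using supp_eq[OF r m] by blast
    then show ?thesis using B.supp[OF r m] by blast
  qed
  define Nr where "Nr = (\<lambda>r. {l \<in> {..<n}. A.near r l})"
  have fNr: "finite (Nr r)" for r unfolding Nr_def by auto
  have cNr: "card (Nr r) \<le> 4" if "r < n" for r unfolding Nr_def using A.near_card[OF that] .
  have "n \<le> 12"
  proof (rule ccontr)
    assume "\<not> n \<le> 12"
    then have n12: "12 < n" by simp
    define r1 where "r1 = (0::nat)"
    have r1: "r1 < n" using n0 r1_def by simp
    have "card (Nr r1) < n" using cNr[OF r1] n12 by linarith
    then obtain r2 where r2: "r2 < n" "r2 \<notin> Nr r1" using exists_outside[OF fNr] by blast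
    have c12: "card (Nr r1 \<union> Nr r2) \<le> 8"
      using card_Un_le[of "Nr r1" "Nr r2"] cNr[OF r1] cNr[OF r2(1)] by linarith
    have "card (Nr r1 \<union> Nr r2) < n" using c12 n12 by linarith
    then obtain r3 where r3: "r3 < n" "r3 \<notin> Nr r1 \<union> Nr r2"
      using exists_outside[of "Nr r1 \<union> Nr r2" n] fNr by blast
    have c123: "card (Nr r1 \<union> Nr r2 \<union> Nr r3) \<le> 12"
      using card_Un_le[of "Nr r1 \<union> Nr r2" "Nr r3"] c12 cNr[OF r3(1)] by linarith
    have "card (Nr r1 \<union> Nr r2 \<union> Nr r3) < n" using c123 n12 by linarith
    then obtain r4 where r4: "r4 < n" "r4 \<notin> Nr r1 \<union> Nr r2 \<union> Nr r3"
      using exists_outside[of "Nr r1 \<union> Nr r2 \<union> Nr r3" n] fNr by blast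
    obtain j1 where j1: "j1 \<in> {1,2,3}" "A.c 1 r1 = B.c j1 r1" using jex[OF r1] by blast
    obtain j2 where j2: "j2 \<in> {1,2,3}" "A.c 1 r2 = B.c j2 r2" using jex[OF r2(1)] by blast
    obtain j3 where j3: "j3 \<in> {1,2,3}" "A.c 1 r3 = B.c j3 r3" using jex[OF r3(1)] by blast
    obtain j4 where j4: "j4 \<in> {1,2,3}" "A.c 1 r4 = B.c j4 r4" using jex[OF r4(1)] by blast
    have dist: "ja \<noteq> jb" if "ra < n" "rb < n" "rb \<notin> Nr ra" "ja \<in> {1,2,3}" "A.c 1 ra = B.c ja ra"
      "A.c 1 rb = B.c jb rb" for ra rb ja jb
    proof
      assume "ja = jb"
      have "\<not> A.near ra rb" using that(2,3) unfolding Nr_def by auto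
      then show False using key[OF that(1,2) _ that(4,5)] that(6) \<open>ja = jb\<close> by blast
    qed
    have "j1 \<noteq> j2" using dist[OF r1 r2(1) r2(2) j1 j2(2)] .
    moreover have "j1 \<noteq> j3" using dist[OF r1 r3(1) _ j1 j3(2)] r3(2) by blast
    moreover have "j2 \<noteq> j3" using dist[OF r2(1) r3(1) _ j2 j3(2)] r3(2) by blast
    moreover have "j1 \<noteq> j4" using dist[OF r1 r4(1) _ j1 j4(2)] r4(2) by blast
    moreover have "j2 \<noteq> j4" using dist[OF r2(1) r4(1) _ j2 j4(2)] r4(2) by blast
    moreover have "j3 \<noteq> j4" using dist[OF r3(1) r4(1) _ j3 j4(2)] r4(2) by blast
    ultimately show False using j1(1) j2(1) j3(1) j4(1) by auto
  qed
  then show ?thesis using d4 by blast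
qed


theorem theorem2p6:
  fixes n :: nat
  assumes "n > 0" and "n \<notin> {4, 8, 12}"
  shows "\<not> (\<exists>M1 M2 N. is_PD n [1, 1, 1] [1, 1, 1] [int n - 3] M1 M2 N)"
proof
  assume "\<exists>M1 M2 N. is_PD n [1, 1, 1] [1, 1, 1] [int n - 3] M1 M2 N"
  then obtain M1 M2 N where "is_PD n [1, 1, 1] [1, 1, 1] [int n - 3] M1 M2 N" by blast
  from main[OF this assms(1)] have "4 dvd n" "n \<le> 12" by auto
  then have "n = 0 \<or> n = 4 \<or> n = 8 \<or> n = 12" by presburger
  then show False using assms by auto
qed

end
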